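(* Let $x\in\mathbb{R}^n$ be fixed, and for $j\in\{1,\dots,N\}$ let \[ h_j(u)=\gamma_j(x)+u^2+r_jq_ju(u+2\beta(x)),\qquad u\in\mathbb{R}, \] where $r_j\ge0$ are constants, $\gamma_j(x)\ge0$, $\beta(x)\in\mathbb{R}$, and $q_1<q_2<\dots<q_N$ are numbers in $[0,1]$. Let $h=[h_1,\dots,h_N]'$ and $U(x)=\{u\in\mathbb{R}:u(u+2\beta(x))\le0\}$. Then $U(x)$ is compact and \[ \inf_{u\in\mathbb{R}}\sup_{p\in\mathcal{S}_{N-1}}p'h(u)=\inf_{u\in U(x)}\sup_{p\in\mathcal{S}_{N-1}}p'h(u),\qquad \sup_{p\in\mathcal{S}_{N-1}}\inf_{u\in\mathbb{R}}p'h(u)=\sup_{p\in\mathcal{S}_{N-1}}\inf_{u\in U(x)}p'h(u). \] Moreover, let $a_\circ\in\{1,\dots,N\}$, $a_\circ\ne1$, and suppose $r_j=r>0$ and $\gamma_j(x)=\gamma(x)$ for all $j\ne a_\circ$. Then for any $j,k\in\{1,\dots,N\}\setminus\{a_\circ\}$ with $j<k$, $h_j(u)>h_k(u)$ for all $u$ in the interior of $U(x)$.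
   Context: $\mathcal{S}_{N-1}=\{p\in\mathbb{R}^N:p_j\ge0,\sum_jp_j=1\}$ is the unit simplex. *)

theory Defs
  imports "HOL-Analysis.Analysis"
begin

text \<open>The unit unit_simplex S_{N-1}, with probability vectors represented as functions
  on indices 1..N (and 0 outside, for a canonical representation).\<close>
definition unit_simplex :: "nat \<Rightarrow> (nat \<Rightarrow> real) set" where
  "unit_simplex N = {p. (\<forall>j\<in>{1..N}. 0 \<le> p j) \<and> (\<Sum>j=1..N. p j) = 1
                  \<and> (\<forall>j. j \<notin> {1..N} \<longrightarrow> p j = 0)}"

definition hfun :: "(nat \<Rightarrow> 'a \<Rightarrow> real) \<Rightarrow> (nat \<Rightarrow> real) \<Rightarrow> (nat \<Rightarrow> real)
                    \<Rightarrow> ('a \<Rightarrow> real) \<Rightarrow> 'a \<Rightarrow> nat \<Rightarrow> real \<Rightarrow> real" where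
  "hfun \<gamma> r q \<beta> x j u = \<gamma> j x + u^2 + r j * q j * u * (u + 2 * \<beta> x)"

definition ph :: "nat \<Rightarrow> (nat \<Rightarrow> real) \<Rightarrow> (nat \<Rightarrow> real \<Rightarrow> real) \<Rightarrow> real \<Rightarrow> real" where
  "ph N p h u = (\<Sum>j=1..N. p j * h j u)"

definition Uset :: "('a \<Rightarrow> real) \<Rightarrow> 'a \<Rightarrow> real set" where
  "Uset \<beta> x = {u. u * (u + 2 * \<beta> x) \<le> 0}"

end

theory Submission
  imports Defs
begin

lemma inf_reduce:
  fixes f :: "real \<Rightarrow> ereal"
  assumes "0 \<in> S" "\<And>u. u \<notin> S \<Longrightarrow> f 0 \<le> f u"
  shows "(INF u\<in>UNIV. f u) = (INF u\<in>S. f u)"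
proof (rule antisym)
  show "(INF u\<in>UNIV. f u) \<le> (INF u\<in>S. f u)" by (rule INF_superset_mono) auto
  show "(INF u\<in>S. f u) \<le> (INF u\<in>UNIV. f u)"
  proof (rule INF_greatest)
    fix u :: real
    show "(INF u\<in>S. f u) \<le> f u"
    proof (cases "u \<in> S")
      case True then show ?thesis by (rule INF_lower)
    next
      case False
      have "(INF u\<in>S. f u) \<le> f 0" using assms(1) by (rule INF_lower)
      also have "\<dots> \<le> f u" using assms(2) False by blast
      finally show ?thesis .
    qed
  qed
qed

lemma interior_U:
  assumes "u \<in> interior (Uset \<beta> x)"
  shows "u * (u + 2 * \<beta> x) < 0"
proof (rule ccontr)
  assume nl: "\<not> u * (u + 2 * \<beta> x) < 0"
  from assms obtain e where e: "e > 0" "ball u e \<subseteq> Uset \<beta> x"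
    by (meson mem_interior)
  have eq: "u * (u + 2 * \<beta> x) = 0" using nl interior_subset[of "Uset \<beta> x"] assms
    unfolding Uset_def by auto
  define c where "c = 2*u + 2 * \<beta> x"
  define t where "t = (if c \<ge> 0 then e/2 else - e/2)"
  have tpos: "t * (c + t) > 0" using e(1) 
  proof (cases "c \<ge> 0")
    case True then show ?thesis using e(1) unfolding t_def by (simp add: mult_pos_pos)
  next
    case False
    hence "c - e/2 < 0" using e(1) by simp
    hence "e * (c - e/2) < 0" using e(1) by (rule mult_pos_neg[rotated])
    then show ?thesis using False e(1) unfolding t_def by (simp add: mult_neg_neg)
  qed
  have "u + t \<in> ball u e" using e(1) unfolding t_def by (auto simp: dist_real_def)
  hence "(u+t) * ((u+t) + 2 * \<beta> x) \<le> 0" using e(2) unfolding Uset_def by auto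
  moreover have "(u+t) * ((u+t) + 2 * \<beta> x) = u * (u + 2 * \<beta> x) + t * (c + t)"
    unfolding c_def by (simp add: algebra_simps)
  ultimately show False using eq tpos by linarith
qed

theorem lemma2:
  fixes N :: nat and x :: "real ^ 'n"
    and \<gamma> :: "nat \<Rightarrow> real ^ 'n \<Rightarrow> real" and \<beta> :: "real ^ 'n \<Rightarrow> real"
    and r q :: "nat \<Rightarrow> real"
  assumes N: "N \<ge> 1"
    and r_nonneg: "\<forall>j\<in>{1..N}. 0 \<le> r j"
    and \<gamma>_nonneg: "\<forall>j\<in>{1..N}. 0 \<le> \<gamma> j x"
    and q_mono: "\<forall>j\<in>{1..N}. \<forall>k\<in>{1..N}. j < k \<longrightarrow> q j < q k"
    and q_range: "\<forall>j\<in>{1..N}. 0 \<le> q j \<and> q j \<le> 1"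
  shows "compact (Uset \<beta> x)
    \<and> (INF u\<in>UNIV. SUP p\<in>unit_simplex N. ereal (ph N p (hfun \<gamma> r q \<beta> x) u))
        = (INF u\<in>Uset \<beta> x. SUP p\<in>unit_simplex N. ereal (ph N p (hfun \<gamma> r q \<beta> x) u))
    \<and> (SUP p\<in>unit_simplex N. INF u\<in>UNIV. ereal (ph N p (hfun \<gamma> r q \<beta> x) u))
        = (SUP p\<in>unit_simplex N. INF u\<in>Uset \<beta> x. ereal (ph N p (hfun \<gamma> r q \<beta> x) u))
    \<and> (\<forall>a0 r0 \<gamma>0. a0 \<in> {1..N} \<and> a0 \<noteq> 1 \<and> 0 < r0
         \<and> (\<forall>j\<in>{1..N} - {a0}. r j = r0 \<and> \<gamma> j x = \<gamma>0)
         \<longrightarrow> (\<forall>j\<in>{1..N} - {a0}. \<forall>k\<in>{1..N} - {a0}. j < k \<longrightarrow>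
                (\<forall>u\<in>interior (Uset \<beta> x). hfun \<gamma> r q \<beta> x j u > hfun \<gamma> r q \<beta> x k u)))"
proof -
  let ?h = "hfun \<gamma> r q \<beta> x"
  have z: "(0::real) \<in> Uset \<beta> x" unfolding Uset_def by simp
  have key: "ph N p ?h 0 \<le> ph N p ?h u" if p: "p \<in> unit_simplex N" and u: "u \<notin> Uset \<beta> x" for p u
  proof -
    have g: "u * (u + 2 * \<beta> x) > 0" using u unfolding Uset_def by auto
    show ?thesis unfolding ph_def
    proof (rule sum_mono)
      fix j assume j: "j \<in> {1..N}"
      have pj: "p j \<ge> 0" using p j unfolding unit_simplex_def by auto
      have "r j * q j \<ge> 0" using r_nonneg q_range j by auto
      hence "r j * q j * (u * (u + 2 * \<beta> x)) \<ge> 0" using g by simp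
      hence "?h j 0 \<le> ?h j u" unfolding hfun_def
        by (simp add: algebra_simps)
      thus "p j * ?h j 0 \<le> p j * ?h j u" using pj by (rule mult_left_mono)
    qed
  qed
  have c: "compact (Uset \<beta> x)"
  proof (unfold compact_eq_bounded_closed, rule conjI)
    have "Uset \<beta> x \<subseteq> cball 0 (2 * \<bar>\<beta> x\<bar>)"
    proof
      fix u assume "u \<in> Uset \<beta> x"
      hence a: "u * u \<le> - 2 * \<beta> x * u" unfolding Uset_def by (simp add: algebra_simps)
      have "\<bar>u\<bar> \<le> 2 * \<bar>\<beta> x\<bar>"
      proof (rule ccontr)
        assume "\<not> ?thesis"
        hence b: "\<bar>u\<bar> > 2 * \<bar>\<beta> x\<bar>" by simp
        have "- 2 * \<beta> x * u \<le> 2 * \<bar>\<beta> x\<bar> * \<bar>u\<bar>" by (simp add: abs_mult[symmetric] abs_ge_minus_self)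
        also have "\<dots> < \<bar>u\<bar> * \<bar>u\<bar>" using b by (intro mult_strict_right_mono) auto
        also have "\<dots> = u * u" by (simp add: abs_mult[symmetric])
        finally show False using a by simp
      qed
      thus "u \<in> cball 0 (2 * \<bar>\<beta> x\<bar>)" by (simp add: dist_real_def)
    qed
    thus "bounded (Uset \<beta> x)" using bounded_cball bounded_subset by blast
    have eqU: "Uset \<beta> x = (\<lambda>u. u * (u + 2 * \<beta> x)) -` {..0}" unfolding Uset_def by auto
    show "closed (Uset \<beta> x)" unfolding eqU
      by (intro continuous_closed_vimage closed_atMost continuous_intros)
  qed
  have p2: "(INF u\<in>UNIV. SUP p\<in>unit_simplex N. ereal (ph N p ?h u))
        = (INF u\<in>Uset \<beta> x. SUP p\<in>unit_simplex N. ereal (ph N p ?h u))"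
    by (rule inf_reduce[OF z], rule SUP_mono) (use key in auto)
  have p3: "(SUP p\<in>unit_simplex N. INF u\<in>UNIV. ereal (ph N p ?h u))
        = (SUP p\<in>unit_simplex N. INF u\<in>Uset \<beta> x. ereal (ph N p ?h u))"
    by (rule SUP_cong[OF refl], rule inf_reduce[OF z]) (use key in auto)
  have p4: "\<forall>a0 r0 \<gamma>0. a0 \<in> {1..N} \<and> a0 \<noteq> 1 \<and> 0 < r0
         \<and> (\<forall>j\<in>{1..N} - {a0}. r j = r0 \<and> \<gamma> j x = \<gamma>0)
         \<longrightarrow> (\<forall>j\<in>{1..N} - {a0}. \<forall>k\<in>{1..N} - {a0}. j < k \<longrightarrow>
                (\<forall>u\<in>interior (Uset \<beta> x). ?h j u > ?h k u))"
  proof (intro allI impI ballI)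
    fix a0 r0 \<gamma>0 j k u
    assume H: "a0 \<in> {1..N} \<and> a0 \<noteq> 1 \<and> 0 < r0 \<and> (\<forall>j\<in>{1..N} - {a0}. r j = r0 \<and> \<gamma> j x = \<gamma>0)"
      and j: "j \<in> {1..N} - {a0}" and k: "k \<in> {1..N} - {a0}" and jk: "j < k"
      and u: "u \<in> interior (Uset \<beta> x)"
    have g: "u * (u + 2 * \<beta> x) < 0" using interior_U[OF u] .
    have qq: "q j < q k" using q_mono j k jk by auto
    have rr: "r j = r0" "r k = r0" "\<gamma> j x = \<gamma>0" "\<gamma> k x = \<gamma>0" using H j k by auto
    have "?h j u - ?h k u = r0 * (q j - q k) * (u * (u + 2 * \<beta> x))"
      unfolding hfun_def rr by (simp add: algebra_simps)
    moreover have "r0 * (q j - q k) < 0" using H qq by (simp add: mult_pos_neg)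
    ultimately have "?h j u - ?h k u > 0" using g by (simp add: mult_neg_neg)
    thus "?h j u > ?h k u" by simp
  qed
  show ?thesis using c p2 p3 p4 by blast
qed

end
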